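(* Let $n\ge r\ge1$, let $\mathcal{O}\subset\mathbb{R}^{n\times r}$ be open with ${\rm St}(n,r)\subset\mathcal{O}$ and $f:\mathcal{O}\to\mathbb{R}$ continuously differentiable. A matrix $X\in\mathcal{S}_{+}^{n,r}$ satisfies \[ 0\in\nabla f(X)+{\rm N}_X M+\mathcal{N}_{\mathbb{R}_{+}^{n\times r}}(X) \] if and only if $-\nabla f(X)\in[\mathcal{T}_{\mathcal{S}_{+}^{n,r}}(X)]^{\circ}$.
   Context: $M={\rm St}(n,r):=\{X\in\mathbb{R}^{n\times r}: X^\top X=I_r\}$, with normal space ${\rm N}_XM=\{XS: S\in\mathbb{R}^{r\times r}\text{ symmetric}\}$. $\mathbb{R}_{+}^{n\times r}$ is the entrywise nonnegative cone, $\mathcal{S}_{+}^{n,r}:=\mathbb{R}_{+}^{n\times r}\cap{\rm St}(n,r)$, $\mathcal{N}_{\mathbb{R}_{+}^{n\times r}}(X)$ is the normal cone of convex analysis, $\mathcal{T}_{\Omega}(X)$ is the (Bouligand) tangent cone of $\Omega$ at $X$, and $K^\circ:=\{V:\langle V,H\rangle\le0\ \forall H\in K\}$ is the negative polar of a cone $K$ with respect to the trace inner product. (The first condition is the paper's definition of a stationary point of $\min_{X\in\mathcal{S}_{+}^{n,r}}f(X)$.) *)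

theory Defs
  imports "HOL-Analysis.Analysis"
begin

text \<open>Matrices in R^(n x r) are rendered as real^'r^'n (rows indexed by 'n, columns by 'r).
  The inner product on this type is the trace inner product sum_ij X_ij Y_ij.\<close>

definition stiefel :: "(real^'r^'n) set" where
  "stiefel = {X. transpose X ** X = mat 1}"

definition nonneg_cone :: "(real^'r^'n) set" where
  "nonneg_cone = {X. \<forall>i j. 0 \<le> X $ i $ j}"

definition nonneg_stiefel :: "(real^'r^'n) set" where
  "nonneg_stiefel = nonneg_cone \<inter> stiefel"

definition stiefel_normal_space :: "real^'r^'n \<Rightarrow> (real^'r^'n) set" where
  "stiefel_normal_space X = {X ** S | S. transpose S = S}"

definition normal_cone :: "'a::real_inner set \<Rightarrow> 'a \<Rightarrow> 'a set" where
  "normal_cone C x = {v. \<forall>y\<in>C. inner v (y - x) \<le> 0}"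

definition tangent_cone :: "'a::real_normed_vector set \<Rightarrow> 'a \<Rightarrow> 'a set" where
  "tangent_cone S x = {h. \<exists>(y::nat \<Rightarrow> 'a) (t::nat \<Rightarrow> real).
      (\<forall>k. y k \<in> S \<and> t k > 0) \<and> y \<longlonglongrightarrow> x \<and> t \<longlonglongrightarrow> 0 \<and>
      (\<lambda>k. (1 / t k) *\<^sub>R (y k - x)) \<longlonglongrightarrow> h}"

definition polar_cone :: "'a::real_inner set \<Rightarrow> 'a set" where
  "polar_cone K = {v. \<forall>h\<in>K. inner v h \<le> 0}"

end

theory Submission
  imports Defs
begin


lemma stiefel_iff:
  "(X::real^'r^'n) \<in> stiefel \<longleftrightarrow> (\<forall>k l. (\<Sum>i\<in>UNIV. X$i$k * X$i$l) = (if k = l then 1 else 0))"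
  by (simp add: stiefel_def vec_eq_iff matrix_matrix_mult_def transpose_def mat_def)

lemma inner_mat: "inner (A::real^'r^'n) B = (\<Sum>i\<in>UNIV. \<Sum>j\<in>UNIV. A$i$j * B$i$j)"
  by (simp add: inner_vec_def)

lemma nonneg_iff: "(X::real^'r^'n) \<in> nonneg_cone \<longleftrightarrow> (\<forall>i j. 0 \<le> X$i$j)"
  by (simp add: nonneg_cone_def)

lemma row_unique:
  fixes X :: "real^'r^'n"
  assumes "X \<in> nonneg_stiefel" "X$i$j > 0" "X$i$k > 0"
  shows "j = k"
proof (rule ccontr)
  assume jk: "j \<noteq> k"
  have nn: "\<And>i j. 0 \<le> X$i$j" using assms(1) by (simp add: nonneg_stiefel_def nonneg_cone_def)
  have "(\<Sum>i\<in>UNIV. X$i$j * X$i$k) = 0" using assms(1) jk by (simp add: nonneg_stiefel_def stiefel_iff)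
  moreover have "\<forall>i\<in>UNIV. 0 \<le> X$i$j * X$i$k" using nn by simp
  ultimately have "\<forall>i\<in>UNIV. X$i$j * X$i$k = 0" using sum_nonneg_eq_0_iff[of UNIV "\<lambda>i. X$i$j * X$i$k"] by simp
  then have "X$i$j * X$i$k = 0" by simp
  then show False using assms(2,3) by simp
qed

lemma sum_expand4:
  fixes x y z w :: "'a::finite \<Rightarrow> real"
  shows "(\<Sum>i\<in>UNIV. (a * x i + b * y i) * (c * z i + d * w i)) =
     a*c*(\<Sum>i\<in>UNIV. x i * z i) + a*d*(\<Sum>i\<in>UNIV. x i * w i) + b*c*(\<Sum>i\<in>UNIV. y i * z i) + b*d*(\<Sum>i\<in>UNIV. y i * w i)"
  by (simp add: algebra_simps sum.distrib sum_distrib_left)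

lemma normal_algebra:
  fixes X D S
  assumes X: "(X::real^'r^'n) \<in> stiefel" and Y: "X + t *\<^sub>R D \<in> stiefel" and t: "t \<noteq> 0"
    and S: "transpose S = (S::real^'r^'r)"
  shows "2 * inner (X ** S) D = - t * (\<Sum>k\<in>UNIV. \<Sum>l\<in>UNIV. S$k$l * (\<Sum>i\<in>UNIV. D$i$k * D$i$l))"
proof -
  define P where "P k l = (\<Sum>i\<in>UNIV. X$i$k * D$i$l)" for k l
  define Q where "Q k l = (\<Sum>i\<in>UNIV. D$i$k * D$i$l)" for k l
  have PQ: "P k l + P l k = - t * Q k l" for k l
  proof -
    have "(\<Sum>i\<in>UNIV. (1 * X$i$k + t * D$i$k) * (1 * X$i$l + t * D$i$l)) = (\<Sum>i\<in>UNIV. X$i$k * X$i$l)"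
      using X Y by (simp add: stiefel_iff)
    then have "(\<Sum>i\<in>UNIV. X$i$k * X$i$l) + t * P k l + t * P l k + t*t* Q k l = (\<Sum>i\<in>UNIV. X$i$k * X$i$l)"
      unfolding sum_expand4 P_def Q_def by (simp add: mult.commute)
    then have "t * (P k l + P l k + t * Q k l) = 0" by (simp add: algebra_simps)
    with t show ?thesis by simp
  qed
  have Ssym: "S$l$k = S$k$l" for k l using S by (metis transpose_def vec_lambda_beta)
  have I: "inner (X ** S) D = (\<Sum>k\<in>UNIV. \<Sum>l\<in>UNIV. S$k$l * P k l)"
  proof -
    have "inner (X ** S) D = (\<Sum>i\<in>UNIV. \<Sum>l\<in>UNIV. \<Sum>k\<in>UNIV. S$k$l * X$i$k * D$i$l)"
      unfolding inner_mat matrix_matrix_mult_def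
      by (simp add: sum_distrib_left sum_distrib_right algebra_simps)
    also have "\<dots> = (\<Sum>l\<in>UNIV. \<Sum>i\<in>UNIV. \<Sum>k\<in>UNIV. S$k$l * X$i$k * D$i$l)"
      by (rule sum.swap)
    also have "\<dots> = (\<Sum>l\<in>UNIV. \<Sum>k\<in>UNIV. \<Sum>i\<in>UNIV. S$k$l * X$i$k * D$i$l)"
      by (rule sum.cong, simp, rule sum.swap)
    also have "\<dots> = (\<Sum>k\<in>UNIV. \<Sum>l\<in>UNIV. \<Sum>i\<in>UNIV. S$k$l * X$i$k * D$i$l)"
      by (rule sum.swap)
    also have "\<dots> = (\<Sum>k\<in>UNIV. \<Sum>l\<in>UNIV. S$k$l * P k l)"
      unfolding P_def by (simp add: sum_distrib_left algebra_simps)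
    finally show ?thesis .
  qed
  have I2: "(\<Sum>k\<in>UNIV. \<Sum>l\<in>UNIV. S$k$l * P k l) = (\<Sum>k\<in>UNIV. \<Sum>l\<in>UNIV. S$k$l * P l k)"
    by (subst sum.swap) (simp add: Ssym)
  have "2 * inner (X ** S) D = (\<Sum>k\<in>UNIV. \<Sum>l\<in>UNIV. S$k$l * (P k l + P l k))"
    unfolding I using I2 by (simp add: algebra_simps sum.distrib)
  also have "\<dots> = - t * (\<Sum>k\<in>UNIV. \<Sum>l\<in>UNIV. S$k$l * Q k l)"
    by (simp add: PQ sum_distrib_left algebra_simps)
  finally show ?thesis unfolding Q_def .
qed



lemma tan_dir:
  fixes X :: "real^'r^'n" and u :: "real^'n" and j :: 'r
  assumes XS: "X \<in> nonneg_stiefel"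
    and orth: "\<And>k. (\<Sum>i\<in>UNIV. u$i * X$i$k) = 0"
    and sgn: "\<And>i. X$i$j = 0 \<Longrightarrow> 0 \<le> u$i"
  shows "(\<chi> i l. if l = j then 2 * u$i else 0) \<in> tangent_cone nonneg_stiefel X"
proof -
  have Xst: "X \<in> stiefel" and nn: "\<And>i l. 0 \<le> X$i$l"
    using XS by (auto simp: nonneg_stiefel_def nonneg_cone_def)
  define a where "a = (\<Sum>i\<in>UNIV. u$i * u$i)"
  have a0: "0 \<le> a" unfolding a_def by (simp add: sum_nonneg)
  define c1 where "c1 t = (1 - t*t*a) / (1 + t*t*a)" for t :: real
  define c2 where "c2 t = 2 * t / (1 + t*t*a)" for t :: real
  have den: "1 + t*t*a > 0" for t :: real using a0 by (simp add: add_pos_nonneg)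
  define Y where "Y t = (\<chi> i l. if l = j then c1 t * X$i$j + c2 t * u$i else X$i$l)" for t
  have Yst: "Y t \<in> stiefel" for t
  proof -
    have "(\<Sum>i\<in>UNIV. Y t$i$k * Y t$i$l) = (if k = l then 1 else 0)" for k l
    proof (cases "k = j")
      case True
      note kj = True
      show ?thesis
      proof (cases "l = j")
        case True
        have "(\<Sum>i\<in>UNIV. Y t$i$k * Y t$i$l) = (\<Sum>i\<in>UNIV. (c1 t * X$i$j + c2 t * u$i) * (c1 t * X$i$j + c2 t * u$i))"
          using kj True by (simp add: Y_def)
        also have "\<dots> = c1 t * c1 t * 1 + c1 t * c2 t * 0 + c2 t * c1 t * 0 + c2 t * c2 t * a"
          unfolding sum_expand4 using Xst orth[of j] unfolding stiefel_iff a_def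
          by (simp add: mult.commute)
        also have "\<dots> = ((1 - t*t*a)*(1 - t*t*a) + (2*t)*(2*t)*a) / ((1+t*t*a)*(1+t*t*a))"
          unfolding c1_def c2_def by (simp add: add_divide_distrib)
        also have "(1 - t*t*a)*(1 - t*t*a) + (2*t)*(2*t)*a = (1+t*t*a)*(1+t*t*a)"
          by (simp add: algebra_simps)
        also have "((1+t*t*a)*(1+t*t*a)) / ((1+t*t*a)*(1+t*t*a)) = 1" using den[of t] by simp
        finally show ?thesis using kj True by simp
      next
        case False
        have "(\<Sum>i\<in>UNIV. Y t$i$k * Y t$i$l) = (\<Sum>i\<in>UNIV. (c1 t * X$i$j + c2 t * u$i) * (1 * X$i$l + 0 * u$i))"
          using kj False by (simp add: Y_def)
        also have "\<dots> = 0"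
          unfolding sum_expand4 using Xst orth[of l] False unfolding stiefel_iff
          by simp
        finally show ?thesis using kj False by simp
      qed
    next
      case False
      note kj = False
      show ?thesis
      proof (cases "l = j")
        case True
        have "(\<Sum>i\<in>UNIV. Y t$i$k * Y t$i$l) = (\<Sum>i\<in>UNIV. (1 * X$i$k + 0 * u$i) * (c1 t * X$i$j + c2 t * u$i))"
          using kj True by (simp add: Y_def)
        also have "\<dots> = 0"
          unfolding sum_expand4 using Xst orth[of k] kj unfolding stiefel_iff
          by (simp add: mult.commute)
        finally show ?thesis using kj True by simp
      next
        case False
        then show ?thesis using kj Xst by (simp add: Y_def stiefel_iff)
      qed
    qed
    then show ?thesis by (simp add: stiefel_iff)
  qed
  define t where "t k = inverse (real (Suc k))" for k
  have t0: "t \<longlonglongrightarrow> 0" unfolding t_def by (rule LIMSEQ_inverse_real_of_nat)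
  have tpos: "t k > 0" for k unfolding t_def by simp
  have c1lim: "(\<lambda>k. c1 (t k)) \<longlonglongrightarrow> 1"
  proof -
    have "(\<lambda>k. (1 - t k * t k * a) / (1 + t k * t k * a)) \<longlonglongrightarrow> (1 - 0 * 0 * a) / (1 + 0 * 0 * a)"
      by (intro tendsto_intros t0) simp
    then show ?thesis by (simp add: c1_def)
  qed
  have c2lim: "(\<lambda>k. c2 (t k)) \<longlonglongrightarrow> 0"
  proof -
    have "(\<lambda>k. 2 * t k / (1 + t k * t k * a)) \<longlonglongrightarrow> 2 * 0 / (1 + 0 * 0 * a)"
      by (intro tendsto_intros t0) simp
    then show ?thesis by (simp add: c2_def)
  qed
  have ev: "eventually (\<lambda>k. \<forall>i. 0 \<le> c1 (t k) * X$i$j + c2 (t k) * u$i) sequentially"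
  proof (rule eventually_all_finite)
    fix i
    show "eventually (\<lambda>k. 0 \<le> c1 (t k) * X$i$j + c2 (t k) * u$i) sequentially"
    proof (cases "X$i$j = 0")
      case True
      have "0 \<le> c2 (t k)" for k using tpos[of k] den[of "t k"] by (simp add: c2_def)
      then show ?thesis using True sgn[OF True] by simp
    next
      case False
      then have pos: "X$i$j > 0" using nn[of i j] by simp
      have "(\<lambda>k. c1 (t k) * X$i$j + c2 (t k) * u$i) \<longlonglongrightarrow> 1 * X$i$j + 0 * u$i"
        by (intro tendsto_intros c1lim c2lim)
      then have "eventually (\<lambda>k. c1 (t k) * X$i$j + c2 (t k) * u$i > 0) sequentially"
        using pos by (simp add: order_tendstoD(1))
      then show ?thesis by (rule eventually_mono) simp
    qed
  qed
  then obtain N where N: "\<And>k. k \<ge> N \<Longrightarrow> \<forall>i. 0 \<le> c1 (t k) * X$i$j + c2 (t k) * u$i"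
    by (auto simp: eventually_sequentially)
  define s where "s k = t (k + N)" for k
  define y where "y k = Y (s k)" for k
  have s0: "s \<longlonglongrightarrow> 0" unfolding s_def by (rule LIMSEQ_ignore_initial_segment[OF t0])
  have spos: "s k > 0" for k unfolding s_def by (rule tpos)
  have yin: "y k \<in> nonneg_stiefel" for k
  proof -
    have "0 \<le> y k $ i $ l" for i l
      using N[of "k + N"] nn[of i l] by (simp add: y_def Y_def s_def)
    then show ?thesis using Yst by (simp add: nonneg_stiefel_def nonneg_cone_def y_def)
  qed
  have c1s: "(\<lambda>k. c1 (s k)) \<longlonglongrightarrow> 1" and c2s: "(\<lambda>k. c2 (s k)) \<longlonglongrightarrow> 0"
    unfolding s_def by (rule LIMSEQ_ignore_initial_segment[OF c1lim], rule LIMSEQ_ignore_initial_segment[OF c2lim])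
  have ylim: "y \<longlonglongrightarrow> X"
  proof -
    have "(\<lambda>k. \<chi> i l. if l = j then c1 (s k) * X$i$j + c2 (s k) * u$i else X$i$l) \<longlonglongrightarrow>
          (\<chi> i l. if l = j then 1 * X$i$j + 0 * u$i else X$i$l)"
      apply (intro tendsto_vec_lambda)
      subgoal for i l by (cases "l = j") (auto intro!: tendsto_eq_intros c1s c2s)
      done
    moreover have "(\<chi> i l. if l = j then 1 * X$i$j + 0 * u$i else X$i$l) = X"
      by (simp add: vec_eq_iff)
    ultimately show ?thesis by (simp add: y_def[abs_def] Y_def)
  qed
  have dq: "(1 / s k) *\<^sub>R (y k - X) = (\<chi> i l. if l = j then (- 2 * s k * a / (1 + s k * s k * a)) * X$i$j + (2 / (1 + s k * s k * a)) * u$i else 0)" for k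
  proof -
    have sk: "s k \<noteq> 0" using spos[of k] by simp
    have d: "1 + s k * s k * a \<noteq> 0" using den[of "s k"] by simp
    have key: "(1 / s k) * (c1 (s k) * x + c2 (s k) * v - x) = (- 2 * s k * a / (1 + s k * s k * a)) * x + (2 / (1 + s k * s k * a)) * v" for x v
    proof -
      have gen: "(1 - q) / DD * x + c / DD * v - x = (- 2 * q / DD) * x + (c / DD) * v"
        if "DD \<noteq> 0" "DD = 1 + q" for DD q c :: real
      proof -
        have "(1 - q) / DD * x - x = ((1 - q) / DD - DD / DD) * x" using that(1) by (simp add: algebra_simps)
        also have "(1 - q) / DD - DD / DD = ((1 - q) - DD) / DD" by (rule diff_divide_distrib[symmetric])
        also have "(1 - q) - DD = - 2 * q" using that(2) by simp
        finally show ?thesis by simp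
      qed
      have "c1 (s k) * x + c2 (s k) * v - x = (- 2 * (s k * s k * a) / (1 + s k * s k * a)) * x + (2 * s k / (1 + s k * s k * a)) * v"
        unfolding c1_def c2_def by (rule gen[OF d]) simp
      also have "\<dots> = s k * ((- 2 * s k * a / (1 + s k * s k * a)) * x + (2 / (1 + s k * s k * a)) * v)"
        by (simp add: algebra_simps)
      finally have "c1 (s k) * x + c2 (s k) * v - x = s k * ((- 2 * s k * a / (1 + s k * s k * a)) * x + (2 / (1 + s k * s k * a)) * v)" .
      then show ?thesis using sk by simp
    qed
    show ?thesis
      using key by (simp add: vec_eq_iff y_def Y_def)
  qed
  have dlim: "(\<lambda>k. (1 / s k) *\<^sub>R (y k - X)) \<longlonglongrightarrow> (\<chi> i l. if l = j then 2 * u$i else 0)"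
  proof -
    have "(\<lambda>k. (\<chi> i l. if l = j then (- 2 * s k * a / (1 + s k * s k * a)) * X$i$j + (2 / (1 + s k * s k * a)) * u$i else 0))
       \<longlonglongrightarrow> (\<chi> i l. if l = j then (- 2 * 0 * a / (1 + 0 * 0 * a)) * X$i$j + (2 / (1 + 0 * 0 * a)) * u$i else 0)"
      apply (intro tendsto_vec_lambda)
      subgoal for i l by (cases "l = j") (auto intro!: tendsto_eq_intros s0 simp: den less_imp_neq[OF den, symmetric])
      done
    moreover have "(\<chi> i l. if l = j then (- 2 * 0 * a / (1 + 0 * 0 * a)) * X$i$j + (2 / (1 + 0 * 0 * a)) * u$i else 0)
       = (\<chi> (i::'n) l. if l = j then 2 * u$i else 0)" by (simp add: vec_eq_iff)
    ultimately show ?thesis unfolding dq by metis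
  qed
  show ?thesis unfolding tangent_cone_def
    using yin spos ylim s0 dlim by blast
qed



lemma polar_use:
  fixes X V :: "real^'r^'n" and u :: "real^'n" and j :: 'r
  assumes V: "V \<in> polar_cone (tangent_cone nonneg_stiefel X)"
    and XS: "X \<in> nonneg_stiefel"
    and orth: "\<And>k. (\<Sum>i\<in>UNIV. u$i * X$i$k) = 0"
    and sgn: "\<And>i. X$i$j = 0 \<Longrightarrow> 0 \<le> u$i"
  shows "(\<Sum>i\<in>UNIV. V$i$j * u$i) \<le> 0"
proof -
  have "inner V (\<chi> i l. if l = j then 2 * u$i else 0) \<le> 0"
    using V tan_dir[OF XS orth sgn] by (auto simp: polar_cone_def)
  moreover have "inner V (\<chi> i l. if l = j then 2 * u$i else 0) = 2 * (\<Sum>i\<in>UNIV. V$i$j * u$i)"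
    unfolding inner_mat by (simp add: if_distrib sum_distrib_left cong: if_cong) (simp add: algebra_simps)
  ultimately show ?thesis by simp
qed

lemma dir1:
  fixes X V :: "real^'r^'n"
  assumes XS: "X \<in> nonneg_stiefel"
    and A: "A \<in> stiefel_normal_space X" and B: "B \<in> normal_cone nonneg_cone X"
  shows "A + B \<in> polar_cone (tangent_cone nonneg_stiefel X)"
  unfolding polar_cone_def
proof (intro CollectI ballI)
  fix h assume "h \<in> tangent_cone nonneg_stiefel X"
  then obtain y t where yt: "\<And>k. y k \<in> nonneg_stiefel" "\<And>k. t k > 0" and ylim: "y \<longlonglongrightarrow> X"
    and t0: "t \<longlonglongrightarrow> 0" and dlim: "(\<lambda>k. (1 / t k) *\<^sub>R (y k - X)) \<longlonglongrightarrow> h"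
    unfolding tangent_cone_def by blast
  define D where "D k = (1 / t k) *\<^sub>R (y k - X)" for k
  obtain S where S: "transpose S = S" "A = X ** S" using A by (auto simp: stiefel_normal_space_def)
  have Xst: "X \<in> stiefel" using XS by (simp add: nonneg_stiefel_def)
  have yD: "y k = X + t k *\<^sub>R D k" for k using yt(2)[of k] by (simp add: D_def)
  have eq: "inner A (D k) = - t k / 2 * (\<Sum>k'\<in>UNIV. \<Sum>l\<in>UNIV. S$k'$l * (\<Sum>i\<in>UNIV. D k$i$k' * D k$i$l))" for k
  proof -
    have "y k \<in> stiefel" using yt(1)[of k] by (simp add: nonneg_stiefel_def)
    then have "2 * inner (X ** S) (D k) = - t k * (\<Sum>k'\<in>UNIV. \<Sum>l\<in>UNIV. S$k'$l * (\<Sum>i\<in>UNIV. D k$i$k' * D k$i$l))"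
      using normal_algebra[OF Xst _ _ S(1)] yD yt(2)[of k] by simp
    then show ?thesis using S(2) by simp
  qed
  have DL: "D \<longlonglongrightarrow> h" using dlim unfolding D_def .
  have l1: "(\<lambda>k. inner A (D k)) \<longlonglongrightarrow> inner A h" by (intro tendsto_intros DL)
  have l2: "(\<lambda>k. inner A (D k)) \<longlonglongrightarrow> - 0 / 2 * (\<Sum>k'\<in>UNIV. \<Sum>l\<in>UNIV. S$k'$l * (\<Sum>i\<in>UNIV. h$i$k' * h$i$l))"
    unfolding eq by (intro tendsto_intros DL t0) simp
  have Ah: "inner A h = 0" using LIMSEQ_unique[OF l1 l2] by simp
  have Bk: "inner B (D k) \<le> 0" for k
  proof -
    have "y k \<in> nonneg_cone" using yt(1)[of k] by (simp add: nonneg_stiefel_def)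
    then have "inner B (y k - X) \<le> 0" using B by (simp add: normal_cone_def)
    then show ?thesis using yt(2)[of k] by (simp add: D_def divide_nonpos_pos)
  qed
  have "(\<lambda>k. inner B (D k)) \<longlonglongrightarrow> inner B h" by (intro tendsto_intros DL)
  then have Bh: "inner B h \<le> 0" using Bk by (intro LIMSEQ_le_const2) auto
  show "inner (A + B) h \<le> 0" using Ah Bh by (simp add: inner_add_left)
qed



lemma F1test:
  fixes X V :: "real^'r^'n"
  assumes V: "V \<in> polar_cone (tangent_cone nonneg_stiefel X)"
    and XS: "X \<in> nonneg_stiefel" and z: "\<And>k. X$i$k = 0"
  shows "V$i$j \<le> 0"
proof -
    define u where "u = (\<chi> i'. if i' = i then 1 else (0::real))"
    have dl: "(\<Sum>i'\<in>UNIV. g i' * u$i') = g i" for g :: "'n \<Rightarrow> real"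
    proof -
      have "(\<Sum>i'\<in>UNIV. g i' * u$i') = (\<Sum>i'\<in>UNIV. if i' = i then g i' else 0)"
        by (rule sum.cong) (auto simp: u_def)
      then show ?thesis by simp
    qed
    have o: "(\<Sum>i'\<in>UNIV. u$i' * X$i'$k) = 0" for k
    proof -
      have "(\<Sum>i'\<in>UNIV. u$i' * X$i'$k) = (\<Sum>i'\<in>UNIV. if i' = i then X$i'$k else 0)"
        by (rule sum.cong) (auto simp: u_def)
      then show "(\<Sum>i'\<in>UNIV. u$i' * X$i'$k) = 0" by (simp add: z)
    qed
    have sg: "0 \<le> u$i'" for i' by (simp add: u_def)
    have "(\<Sum>i'\<in>UNIV. V$i'$j * u$i') \<le> 0"
      by (rule polar_use[OF V XS o sg])
    then show ?thesis by (simp only: dl)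
qed

lemma dir2:
  fixes X V :: "real^'r^'n"
  assumes V: "V \<in> polar_cone (tangent_cone nonneg_stiefel X)"
    and XS: "X \<in> nonneg_stiefel"
  shows "\<exists>A\<in>stiefel_normal_space X. \<exists>B\<in>normal_cone nonneg_cone X. V = A + B"
proof -
  have Xst: "X \<in> stiefel" and nn: "\<And>i l. 0 \<le> X$i$l"
    using XS by (auto simp: nonneg_stiefel_def nonneg_cone_def)
  have F1: "V$i$j \<le> 0" if z: "\<And>k. X$i$k = 0" for i j
    by (rule F1test[OF V XS z])
  define sd where "sd j = (\<Sum>i\<in>UNIV. V$i$j * X$i$j)" for j
  have F2: "V$i$j = sd j * X$i$j" if pos: "X$i$j > 0" for i j
  proof -
    define w where "w = (\<chi> i'. if X$i'$j > 0 then V$i'$j - sd j * X$i'$j else 0)"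
    have wX: "w$i' * X$i'$j = (V$i'$j - sd j * X$i'$j) * X$i'$j" for i'
      using nn[of i' j] by (auto simp: w_def)
    have orth: "(\<Sum>i'\<in>UNIV. w$i' * X$i'$k) = 0" for k
    proof (cases "k = j")
      case True
      have "(\<Sum>i'\<in>UNIV. w$i' * X$i'$k) = (\<Sum>i'\<in>UNIV. V$i'$j * X$i'$j) - sd j * (\<Sum>i'\<in>UNIV. X$i'$j * X$i'$j)"
      proof -
        have "(\<Sum>i'\<in>UNIV. w$i' * X$i'$k) = (\<Sum>i'\<in>UNIV. (V$i'$j - sd j * X$i'$j) * X$i'$j)"
          using True wX by (intro sum.cong refl) simp
        also have "\<dots> = (\<Sum>i'\<in>UNIV. V$i'$j * X$i'$j - sd j * (X$i'$j * X$i'$j))"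
          by (rule sum.cong) (simp_all add: left_diff_distrib mult.assoc)
        also have "\<dots> = (\<Sum>i'\<in>UNIV. V$i'$j * X$i'$j) - sd j * (\<Sum>i'\<in>UNIV. X$i'$j * X$i'$j)"
          by (simp add: sum_subtractf sum_distrib_left)
        finally show ?thesis .
      qed
      also have "\<dots> = 0"
      proof -
        have "(\<Sum>i'\<in>UNIV. X$i'$j * X$i'$j) = 1" using Xst[unfolded stiefel_iff, rule_format, of j j] by simp
        then show ?thesis by (simp add: sd_def)
      qed
      finally show ?thesis .
    next
      case False
      have "w$i' * X$i'$k = 0" for i'
      proof (cases "X$i'$j > 0")
        case True
        then have "\<not> X$i'$k > 0" using row_unique[OF XS True, of k] False by blast
        then have "X$i'$k = 0" using nn[of i' k] by simp
        then show ?thesis by simp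
      qed (simp add: w_def)
      then show ?thesis by (intro sum.neutral ballI)
    qed
    have orthm: "(\<Sum>i'\<in>UNIV. (-w)$i' * X$i'$k) = 0" for k
      using orth[of k] by (simp add: sum_negf)
    have sg: "0 \<le> w$i'" "0 \<le> (-w)$i'" if "X$i'$j = 0" for i' using that by (auto simp: w_def)
    have p1: "(\<Sum>i'\<in>UNIV. V$i'$j * w$i') \<le> 0" by (rule polar_use[OF V XS orth sg(1)])
    have p2: "(\<Sum>i'\<in>UNIV. V$i'$j * (-w)$i') \<le> 0" by (rule polar_use[OF V XS orthm sg(2)])
    have p: "(\<Sum>i'\<in>UNIV. V$i'$j * w$i') = 0" using p1 p2 by (simp add: sum_negf)
    have ww: "w$i' * w$i' = V$i'$j * w$i' - sd j * (w$i' * X$i'$j)" for i'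
      by (auto simp: w_def algebra_simps)
    have "(\<Sum>i'\<in>UNIV. w$i' * w$i') = (\<Sum>i'\<in>UNIV. V$i'$j * w$i') - sd j * (\<Sum>i'\<in>UNIV. w$i' * X$i'$j)"
      by (simp add: ww sum_subtractf sum_distrib_left)
    also have "\<dots> = 0" using p orth[of j] by simp
    finally have "\<forall>i'\<in>UNIV. w$i' * w$i' = 0"
      using sum_nonneg_eq_0_iff[of UNIV "\<lambda>i'. w$i' * w$i'"] by simp
    then have "w$i = 0" by simp
    then show ?thesis using pos by (simp add: w_def)
  qed
  define c where "c = (\<Sum>i\<in>UNIV. \<Sum>l\<in>UNIV. \<Sum>k\<in>UNIV. (if X$i$k > 0 then \<bar>V$i$l\<bar> / X$i$k else 0))"
  have cbig: "\<bar>V$i$l\<bar> / X$i$k \<le> c" if "X$i$k > 0" for i l k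
  proof -
    have nn3: "0 \<le> (if X$i$k > 0 then \<bar>V$i$l\<bar> / X$i$k else 0)" for i l k by auto
    have "\<bar>V$i$l\<bar> / X$i$k = (if X$i$k > 0 then \<bar>V$i$l\<bar> / X$i$k else 0)" using that by simp
    also have "\<dots> \<le> (\<Sum>k\<in>UNIV. (if X$i$k > 0 then \<bar>V$i$l\<bar> / X$i$k else 0))"
      by (rule member_le_sum) (auto simp: nn3)
    also have "\<dots> \<le> (\<Sum>l\<in>UNIV. \<Sum>k\<in>UNIV. (if X$i$k > 0 then \<bar>V$i$l\<bar> / X$i$k else 0))"
      by (rule member_le_sum[where f = "\<lambda>l. \<Sum>k\<in>UNIV. (if X$i$k > 0 then \<bar>V$i$l\<bar> / X$i$k else 0)"])
        (auto intro: sum_nonneg simp: nn3)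
    also have "\<dots> \<le> c" unfolding c_def
      by (rule member_le_sum[where f = "\<lambda>i. \<Sum>l\<in>UNIV. \<Sum>k\<in>UNIV. (if X$i$k > 0 then \<bar>V$i$l\<bar> / X$i$k else 0)"])
        (auto intro!: sum_nonneg simp: nn3)
    finally show ?thesis .
  qed
  define S :: "real^'r^'r" where "S = (\<chi> k l. if k = l then sd k else c)"
  define A where "A = X ** S"
  define B where "B = V - A"
  have SS: "transpose S = S" by (simp add: S_def transpose_def vec_eq_iff)
  have Bent: "B$i$l \<le> 0 \<and> (X$i$l > 0 \<longrightarrow> B$i$l = 0)" for i l
  proof (cases "\<forall>k. X$i$k = 0")
    case True
    then show ?thesis using F1[of i l] by (simp add: B_def A_def matrix_matrix_mult_def)
  next
    case False
    then obtain k where "X$i$k \<noteq> 0" by blast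
    then have kp: "X$i$k > 0" using nn[of i k] by simp
    have oth: "X$i$k' = 0" if "k' \<noteq> k" for k'
    proof -
      have "\<not> X$i$k' > 0" using row_unique[OF XS kp, of k'] that by blast
      then show ?thesis using nn[of i k'] by simp
    qed
    have "A$i$l = (\<Sum>k'\<in>UNIV. X$i$k' * S$k'$l)" by (simp add: A_def matrix_matrix_mult_def)
    also have "\<dots> = (\<Sum>k'\<in>UNIV. if k' = k then X$i$k * S$k$l else 0)"
      by (rule sum.cong) (auto simp: oth)
    also have "\<dots> = X$i$k * S$k$l" by simp
    finally have Ail: "A$i$l = X$i$k * S$k$l" .
    show ?thesis
    proof (cases "k = l")
      case True
      then show ?thesis using Ail F2[OF kp] by (simp add: B_def S_def)
    next
      case False
      have "\<bar>V$i$l\<bar> / X$i$k \<le> c" by (rule cbig[OF kp])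
      then have c1: "\<bar>V$i$l\<bar> \<le> c * X$i$k" using kp by (simp add: pos_divide_le_eq)
      have "S$k$l = c" using False by (simp add: S_def)
      then have "A$i$l = c * X$i$k" using Ail by simp
      then have "B$i$l \<le> 0" using c1 abs_ge_self[of "V$i$l"] unfolding B_def by simp
      moreover have "X$i$l = 0" using oth False by auto
      ultimately show ?thesis by simp
    qed
  qed
  have "A \<in> stiefel_normal_space X" unfolding stiefel_normal_space_def A_def using SS by blast
  moreover have "B \<in> normal_cone nonneg_cone X"
    unfolding normal_cone_def
  proof (intro CollectI ballI)
    fix Y assume "Y \<in> (nonneg_cone :: (real^'r^'n) set)"
    then have Yn: "0 \<le> Y$i$l" for i l by (simp add: nonneg_cone_def)
    have "B$i$l * (Y$i$l - X$i$l) \<le> 0" for i l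
    proof -
      have "B$i$l * X$i$l = 0" using Bent[of i l] nn[of i l] by (cases "X$i$l > 0") auto
      moreover have "B$i$l * Y$i$l \<le> 0" using Bent[of i l] Yn[of i l] by (simp add: mult_nonpos_nonneg)
      moreover have "B$i$l * (Y$i$l - X$i$l) = B$i$l * Y$i$l - B$i$l * X$i$l" by (rule right_diff_distrib)
      ultimately show ?thesis by linarith
    qed
    then show "inner B (Y - X) \<le> 0" unfolding inner_mat
      by (simp add: sum_nonpos)
  qed
  moreover have "V = A + B" by (simp add: B_def)
  ultimately show ?thesis by blast
qed

theorem lemma4p3:
  fixes f :: "real^'r^'n \<Rightarrow> real"
    and gradf :: "real^'r^'n \<Rightarrow> real^'r^'n"
    and U :: "(real^'r^'n) set"
    and X :: "real^'r^'n"
  assumes "CARD('r) \<le> CARD('n)"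
    and "open U"
    and "stiefel \<subseteq> U"
    and "\<And>Y. Y \<in> U \<Longrightarrow> GDERIV f Y :> gradf Y"
    and "continuous_on U gradf"
    and "X \<in> nonneg_stiefel"
  shows "(\<exists>A\<in>stiefel_normal_space X. \<exists>B\<in>normal_cone nonneg_cone X. gradf X + A + B = 0)
     \<longleftrightarrow> - gradf X \<in> polar_cone (tangent_cone nonneg_stiefel X)"
proof
  assume "\<exists>A\<in>stiefel_normal_space X. \<exists>B\<in>normal_cone nonneg_cone X. gradf X + A + B = 0"
  then obtain A B where AB: "A \<in> stiefel_normal_space X" "B \<in> normal_cone nonneg_cone X" "gradf X + A + B = 0" by blast
  from AB(3) have "- gradf X = A + B"
    by (simp add: neg_eq_iff_add_eq_0 add.assoc)
  then show "- gradf X \<in> polar_cone (tangent_cone nonneg_stiefel X)" using dir1[OF assms(6) AB(1,2)] by simp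
next
  assume "- gradf X \<in> polar_cone (tangent_cone nonneg_stiefel X)"
  from dir2[OF this assms(6)] obtain A B where "A \<in> stiefel_normal_space X" "B \<in> normal_cone nonneg_cone X" "- gradf X = A + B" by blast
  then show "\<exists>A\<in>stiefel_normal_space X. \<exists>B\<in>normal_cone nonneg_cone X. gradf X + A + B = 0"
    by (metis add.assoc neg_eq_iff_add_eq_0)
qed

end
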